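(* Let $(X,\rho)$ be a metric space, $f:X\to X$ continuous, $x\in X$, $\ell\in\mathbb N$, $n\ge2$ an integer and $\varepsilon>0$. Then \[ C_\ell(x,n,\varepsilon)=\frac{n-1}{n}\Big[\mathrm{RR}_\ell(x,n,\varepsilon)-(\ell-1)\Lambda_\ell(x,n,\varepsilon)\Big]+\delta^C_\ell,\qquad \frac1n\le\delta^C_\ell<\frac{2\ell}{n}. \]
   Context: Bowen metric $\rho_\ell(y,z)=\max_{0\le i<\ell}\rho(f^iy,f^iz)$; correlation sum $C_\ell(x,n,\varepsilon)=n^{-2}\#\{(i,j):0\le i,j<n,\ \rho_\ell(f^ix,f^jx)\le\varepsilon\}$. Recurrence plot $R(x,n,\varepsilon)$: $n\times n$ matrix ($0\le i,j<n$) with entry $1$ iff $\rho(f^ix,f^jx)\le\varepsilon$. A line of length $\ell$: triple $(i,j,\ell)$ with $0\le i,j\le n-\ell$, $i\ne j$, entries $(i+k,j+k)=1$ for $0\le k<\ell$, entry $(i-1,j-1)=0$ if $\min\{i,j\}>0$, entry $(i+\ell,j+\ell)=0$ if $\max\{i,j\}<n-\ell$. $N_l$ = number of lines of length exactly $l$ (boundary lines included), $\lambda_l=N_l/(n^2-n)$, $\Lambda_\ell=\sum_{l\ge\ell}\lambda_l$, $\mathrm{RR}_\ell=\sum_{l\ge\ell}l\lambda_l$. *)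

theory Defs
  imports "HOL-Analysis.Analysis"
begin

(* Bowen metric rho_l(y,z) = max_{0<=i<l} rho(f^i y, f^i z)  (meant for l >= 1) *)
definition bowen_dist :: "('a::metric_space \<Rightarrow> 'a) \<Rightarrow> nat \<Rightarrow> 'a \<Rightarrow> 'a \<Rightarrow> real" where
  "bowen_dist f l y z = (MAX i\<in>{..<l}. dist ((f ^^ i) y) ((f ^^ i) z))"

definition corr_sum :: "('a::metric_space \<Rightarrow> 'a) \<Rightarrow> nat \<Rightarrow> 'a \<Rightarrow> nat \<Rightarrow> real \<Rightarrow> real" where
  "corr_sum f l x n eps =
     real (card {(i, j). i < n \<and> j < n \<and> bowen_dist f l ((f ^^ i) x) ((f ^^ j) x) \<le> eps})
     / (real n)^2"

definition rplot :: "('a::metric_space \<Rightarrow> 'a) \<Rightarrow> 'a \<Rightarrow> nat \<Rightarrow> real \<Rightarrow> nat \<Rightarrow> nat \<Rightarrow> bool" where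
  "rplot f x n eps i j \<longleftrightarrow> i < n \<and> j < n \<and> dist ((f ^^ i) x) ((f ^^ j) x) \<le> eps"

definition is_line :: "('a::metric_space \<Rightarrow> 'a) \<Rightarrow> 'a \<Rightarrow> nat \<Rightarrow> real \<Rightarrow> nat \<Rightarrow> nat \<Rightarrow> nat \<Rightarrow> bool" where
  "is_line f x n eps i j l \<longleftrightarrow>
     l \<le> n \<and> i \<le> n - l \<and> j \<le> n - l \<and> i \<noteq> j \<and>
     (\<forall>k<l. rplot f x n eps (i + k) (j + k)) \<and>
     (min i j > 0 \<longrightarrow> \<not> rplot f x n eps (i - 1) (j - 1)) \<and>
     (max i j < n - l \<longrightarrow> \<not> rplot f x n eps (i + l) (j + l))"

definition num_lines :: "('a::metric_space \<Rightarrow> 'a) \<Rightarrow> 'a \<Rightarrow> nat \<Rightarrow> real \<Rightarrow> nat \<Rightarrow> nat" where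
  "num_lines f x n eps l = card {(i, j). is_line f x n eps i j l}"

definition line_freq :: "('a::metric_space \<Rightarrow> 'a) \<Rightarrow> 'a \<Rightarrow> nat \<Rightarrow> real \<Rightarrow> nat \<Rightarrow> real" where
  "line_freq f x n eps l = real (num_lines f x n eps l) / ((real n)^2 - real n)"

(* Lambda_l = sum_{l' >= l} lambda_{l'}  (lambda_{l'} = 0 for l' > n, so the sum is finite) *)
definition Lambda_sum :: "('a::metric_space \<Rightarrow> 'a) \<Rightarrow> 'a \<Rightarrow> nat \<Rightarrow> real \<Rightarrow> nat \<Rightarrow> real" where
  "Lambda_sum f x n eps l = (\<Sum>l'\<in>{l..n}. line_freq f x n eps l')"

definition RR_sum :: "('a::metric_space \<Rightarrow> 'a) \<Rightarrow> 'a \<Rightarrow> nat \<Rightarrow> real \<Rightarrow> nat \<Rightarrow> real" where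
  "RR_sum f x n eps l = (\<Sum>l'\<in>{l..n}. real l' * line_freq f x n eps l')"

end

theory Submission
  imports Defs
begin

lemma bowen_le_iff:
  assumes "l \<ge> 1"
  shows "bowen_dist f l ((f ^^ i) x) ((f ^^ j) x) \<le> eps \<longleftrightarrow>
         (\<forall>k<l. dist ((f ^^ (i + k)) x) ((f ^^ (j + k)) x) \<le> eps)"
proof -
  have "0 \<in> {..<l}" using assms by simp
  hence "{..<l} \<noteq> {}" by blast
  hence "bowen_dist f l ((f ^^ i) x) ((f ^^ j) x) \<le> eps \<longleftrightarrow>
     (\<forall>k<l. dist ((f ^^ k) ((f ^^ i) x)) ((f ^^ k) ((f ^^ j) x)) \<le> eps)"
    unfolding bowen_dist_def by auto
  also have "\<dots> \<longleftrightarrow> (\<forall>k<l. dist ((f ^^ (i + k)) x) ((f ^^ (j + k)) x) \<le> eps)"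
    by (simp add: funpow_add add.commute)
  finally show ?thesis .
qed

lemma line_start_unique:
  assumes "is_line f x n eps i j L" "is_line f x n eps i' j' L'"
    "i + t = i' + t'" "j + t = j' + t'" "t < L" "t' < L'" "i < i'"
  shows False
proof -
  have "i' > 0" "j' > 0" using assms(3,4,7) by linarith+
  hence "\<not> rplot f x n eps (i' - 1) (j' - 1)" using assms(2) unfolding is_line_def by auto
  moreover have "\<forall>k<L. rplot f x n eps (i + k) (j + k)"
    using assms(1) unfolding is_line_def by blast
  hence "rplot f x n eps (i + (i' - 1 - i)) (j + (i' - 1 - i))"
    using assms(3,5,7) by (metis add_diff_cancel_left' less_diff_conv2 diff_less_mono2 le_add1 le_less_trans less_imp_diff_less linorder_not_le nat_le_linear zero_less_diff)
  moreover have "i + (i' - 1 - i) = i' - 1" "j + (i' - 1 - i) = j' - 1"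
    using assms(3,4,7) by linarith+
  ultimately show False by simp
qed

lemma line_len_unique:
  assumes "is_line f x n eps i j L" "is_line f x n eps i j L'" "L < L'"
  shows False
proof -
  have "i + L' \<le> n" "j + L' \<le> n" using assms(2) unfolding is_line_def by auto
  hence "max i j < n - L" using assms(3) by auto
  hence "\<not> rplot f x n eps (i + L) (j + L)" using assms(1) unfolding is_line_def by auto
  moreover have "rplot f x n eps (i + L) (j + L)" using assms(2,3) unfolding is_line_def by auto
  ultimately show False by simp
qed

lemma card_segments:
  assumes l1: "l \<ge> 1"
  shows "card {(i, j). i \<noteq> j \<and> l \<le> n \<and> i \<le> n - l \<and> j \<le> n - l \<and>
                 (\<forall>k<l. rplot f x n eps (i + k) (j + k))}
       = (\<Sum>L\<in>{l..n}. (L + 1 - l) * num_lines f x n eps L)"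
    (is "card ?S = _")
proof -
  let ?Ln = "\<lambda>L. {(i, j). is_line f x n eps i j L}"
  define T where "T = (SIGMA L:{l..n}. ?Ln L \<times> {..L - l})"
  define g where "g = (\<lambda>(L::nat, (i::nat, j::nat), t::nat). (i + t, j + t))"
  have finLn: "finite (?Ln L)" for L
  proof (rule finite_subset)
    show "?Ln L \<subseteq> {..n} \<times> {..n}" unfolding is_line_def by auto
  qed auto
  have cardT: "card T = (\<Sum>L\<in>{l..n}. (L + 1 - l) * num_lines f x n eps L)"
    unfolding T_def num_lines_def
    by (subst card_SigmaI) (auto simp: finLn card_cartesian_product Suc_diff_le intro!: sum.cong)
  have inj: "inj_on g T"
  proof (rule inj_onI)
    fix p q assume p: "p \<in> T" and q: "q \<in> T" and eq: "g p = g q"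
    obtain L i j t where pe: "p = (L, (i, j), t)" by (metis prod.collapse)
    obtain L' i' j' t' where qe: "q = (L', (i', j'), t')" by (metis prod.collapse)
    have li: "is_line f x n eps i j L" "t \<le> L - l" "l \<le> L" using p pe T_def by auto
    have li': "is_line f x n eps i' j' L'" "t' \<le> L' - l" "l \<le> L'" using q qe T_def by auto
    have e1: "i + t = i' + t'" "j + t = j' + t'" using eq pe qe g_def by auto
    have tl: "t < L" "t' < L'" using li li' l1 by auto
    have "\<not> i < i'" using line_start_unique[OF li(1) li'(1) e1 tl] by (rule notI)
    moreover have "\<not> i' < i" using line_start_unique[OF li'(1) li(1) e1[symmetric] tl(2,1)] by (rule notI)
    ultimately have ii: "i = i'" by simp
    hence tt: "t = t'" "j = j'" using e1 by auto
    have "\<not> L < L'" using line_len_unique[of f x n eps i j L L'] li(1) li'(1) ii tt by auto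
    moreover have "\<not> L' < L" using line_len_unique[of f x n eps i j L' L] li(1) li'(1) ii tt by auto
    ultimately show "p = q" using pe qe ii tt by simp
  qed
  have img: "g ` T = ?S"
  proof
    show "g ` T \<subseteq> ?S"
    proof
      fix y assume "y \<in> g ` T"
      then obtain p where p: "p \<in> T" "y = g p" by blast
      obtain L i j t where pe: "p = (L, (i, j), t)" by (metis prod.collapse)
      have y: "y = (i + t, j + t)" using p(2) pe g_def by simp
      have pT: "(L, (i, j), t) \<in> T" using p(1) pe by simp
      have "is_line f x n eps i j L \<and> t \<le> L - l \<and> l \<le> L \<and> L \<le> n"
        using pT unfolding T_def by simp
      hence li: "is_line f x n eps i j L" "t \<le> L - l" "l \<le> L" "L \<le> n" by simp_all
      have "\<forall>k<L. rplot f x n eps (i + k) (j + k)" "i \<le> n - L" "j \<le> n - L" "i \<noteq> j"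
        using li(1) unfolding is_line_def by auto
      moreover have "\<forall>k<l. rplot f x n eps (i + t + k) (j + t + k)"
      proof (intro allI impI)
        fix k assume "k < l"
        hence "t + k < L" using li(2,3) by linarith
        hence "rplot f x n eps (i + (t + k)) (j + (t + k))" using calculation(1) by blast
        thus "rplot f x n eps (i + t + k) (j + t + k)" by (simp add: add.assoc)
      qed
      ultimately show "y \<in> ?S" using y li by auto
    qed
  next
    show "?S \<subseteq> g ` T"
    proof
      fix y assume yS: "y \<in> ?S"
      obtain a b where y: "y = (a, b)" using surj_pair[of y] by blast
      have ab: "a \<noteq> b" "l \<le> n" "a \<le> n - l" "b \<le> n - l"
        "\<forall>k<l. rplot f x n eps (a + k) (b + k)" using yS unfolding y by simp_all
      define P0 where "P0 s \<longleftrightarrow> s \<le> min a b \<and> (\<forall>r\<le>s. rplot f x n eps (a - r) (b - r))" for s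
      have "0 < l" using l1 by simp
      hence "rplot f x n eps (a + 0) (b + 0)" using ab(5) by blast
      hence P00: "P0 0" unfolding P0_def by simp
      have bd: "\<forall>s. P0 s \<longrightarrow> s \<le> min a b" unfolding P0_def by blast
      have "\<exists>t. P0 t \<and> (\<forall>s. P0 s \<longrightarrow> s \<le> t)" by (rule Nat.ex_has_greatest_nat[OF P00 bd])
      then obtain t0 where t0: "P0 t0" "\<forall>s. P0 s \<longrightarrow> s \<le> t0" by (elim exE conjE)
      define i where "i = a - t0"
      define j where "j = b - t0"
      have "t0 \<le> min a b" using t0(1) unfolding P0_def by blast
      hence t0ab: "t0 \<le> a" "t0 \<le> b" by simp_all
      define P1 where "P1 m \<longleftrightarrow> (\<forall>k<m. rplot f x n eps (i + k) (j + k))" for m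
      have P1b: "m \<le> n" if "P1 m" for m
      proof (rule ccontr)
        assume "\<not> m \<le> n"
        hence "n < m" by simp
        hence "rplot f x n eps (i + n) (j + n)" using that unfolding P1_def by blast
        thus False unfolding rplot_def by simp
      qed
      have P1t: "P1 (t0 + l)" unfolding P1_def
      proof (intro allI impI)
        fix k assume k: "k < t0 + l"
        show "rplot f x n eps (i + k) (j + k)"
        proof (cases "k \<le> t0")
          case True
          have "\<forall>r\<le>t0. rplot f x n eps (a - r) (b - r)" using t0(1) unfolding P0_def by blast
          hence "rplot f x n eps (a - (t0 - k)) (b - (t0 - k))" by simp
          moreover have "a - (t0 - k) = i + k" "b - (t0 - k) = j + k"
            using True t0ab unfolding i_def j_def by auto
          ultimately show ?thesis by simp
        next
          case False
          hence "k - t0 < l" using k by linarith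
          hence "rplot f x n eps (a + (k - t0)) (b + (k - t0))" using ab(5) by blast
          moreover have "a + (k - t0) = i + k" "b + (k - t0) = j + k"
            using False t0ab unfolding i_def j_def by auto
          ultimately show ?thesis by simp
        qed
      qed
      have "\<exists>L. P1 L \<and> (\<forall>m. P1 m \<longrightarrow> m \<le> L)"
      proof -
        have bd1: "\<forall>m. P1 m \<longrightarrow> m \<le> n" using P1b by blast
        show ?thesis using Nat.ex_has_greatest_nat[where P=P1, OF P1t bd1] .
      qed
      then obtain L where L: "P1 L" "\<forall>m. P1 m \<longrightarrow> m \<le> L" by (elim exE conjE)
      have Lge: "t0 + l \<le> L" using L P1t by auto
      have Ln: "L \<le> n" using P1b L by auto
      have "L - 1 < L" using Lge l1 by linarith
      hence last: "rplot f x n eps (i + (L - 1)) (j + (L - 1))" using L(1) unfolding P1_def by blast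
      hence ijL: "i \<le> n - L" "j \<le> n - L" using Lge l1 unfolding rplot_def by auto
      have ij: "i \<noteq> j" using ab(1) t0ab unfolding i_def j_def by auto
      have before: "\<not> rplot f x n eps (i - 1) (j - 1)" if "min i j > 0"
      proof
        assume r: "rplot f x n eps (i - 1) (j - 1)"
        have "P0 (t0 + 1)" unfolding P0_def
        proof (intro conjI allI impI)
          show "t0 + 1 \<le> min a b" using that unfolding i_def j_def by auto
          fix r' assume "r' \<le> t0 + 1"
          then consider "r' \<le> t0" | "r' = t0 + 1" by linarith
          thus "rplot f x n eps (a - r') (b - r')"
          proof cases
            case 1
            have "\<forall>r\<le>t0. rplot f x n eps (a - r) (b - r)" using t0(1) unfolding P0_def by blast
            thus ?thesis using 1 by blast
          next
            case 2
            have "a - r' = i - 1" "b - r' = j - 1" using 2 unfolding i_def j_def by auto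
            thus ?thesis using r by simp
          qed
        qed
        hence "t0 + 1 \<le> t0" using t0(2) by blast
        thus False by simp
      qed
      have after: "\<not> rplot f x n eps (i + L) (j + L)"
      proof
        assume "rplot f x n eps (i + L) (j + L)"
        note hL = this
        have "P1 (L + 1)" unfolding P1_def
        proof (intro allI impI)
          fix k assume "k < L + 1"
          then consider "k < L" | "k = L" by linarith
          thus "rplot f x n eps (i + k) (j + k)"
          proof cases
            case 1 thus ?thesis using L(1) unfolding P1_def by blast
          next
            case 2 thus ?thesis using hL by simp
          qed
        qed
        hence "L + 1 \<le> L" using L(2) by blast
        thus False by simp
      qed
      have "\<forall>k<L. rplot f x n eps (i + k) (j + k)" using L(1) unfolding P1_def .
      hence isl: "is_line f x n eps i j L"
        using Ln ijL ij before after by (simp add: is_line_def)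
      have "t0 \<le> L - l" using Lge by linarith
      hence mem: "(L, (i, j), t0) \<in> T" unfolding T_def using isl Lge Ln by simp
      have "y = g (L, (i, j), t0)" unfolding g_def i_def j_def using y t0ab by simp
      thus "y \<in> g ` T" using mem by (rule image_eqI)
    qed
  qed
  have "card ?S = card T" using card_image[OF inj] img by simp
  thus ?thesis using cardT by simp
qed

lemma RR_Lambda:
  assumes "l \<ge> 1"
  shows "RR_sum f x n eps l - (real l - 1) * Lambda_sum f x n eps l
       = real (\<Sum>L\<in>{l..n}. (L + 1 - l) * num_lines f x n eps L) / ((real n)^2 - real n)"
proof -
  have "RR_sum f x n eps l - (real l - 1) * Lambda_sum f x n eps l
     = (\<Sum>L\<in>{l..n}. (real L - (real l - 1)) * line_freq f x n eps L)"
    unfolding RR_sum_def Lambda_sum_def by (simp add: sum_distrib_left sum_subtractf left_diff_distrib)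
  also have "\<dots> = (\<Sum>L\<in>{l..n}. real ((L + 1 - l) * num_lines f x n eps L) / ((real n)^2 - real n))"
  proof (rule sum.cong)
    fix L assume "L \<in> {l..n}"
    hence "real (L + 1 - l) = real L - (real l - 1)" using assms by (simp add: of_nat_diff)
    thus "(real L - (real l - 1)) * line_freq f x n eps L
        = real ((L + 1 - l) * num_lines f x n eps L) / ((real n)^2 - real n)"
      unfolding line_freq_def by simp
  qed simp
  also have "\<dots> = real (\<Sum>L\<in>{l..n}. (L + 1 - l) * num_lines f x n eps L) / ((real n)^2 - real n)"
    by (simp add: sum_divide_distrib)
  finally show ?thesis .
qed

theorem mainTheorem9:
  fixes f :: "'a::metric_space \<Rightarrow> 'a" and x :: 'a and l n :: nat and eps :: real
  assumes "continuous_on UNIV f"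
    and "l \<ge> 1"
    and "n \<ge> 2"
    and "eps > 0"
  shows "\<exists>\<delta>::real.
           corr_sum f l x n eps
             = (real n - 1) / real n * (RR_sum f x n eps l - (real l - 1) * Lambda_sum f x n eps l) + \<delta>
           \<and> 1 / real n \<le> \<delta> \<and> \<delta> < 2 * real l / real n"
proof -
  note l1 = assms(2)
  define P where "P = {(i, j). i < n \<and> j < n \<and> bowen_dist f l ((f ^^ i) x) ((f ^^ j) x) \<le> eps}"
  define S where "S = {(i, j). i \<noteq> j \<and> l \<le> n \<and> i \<le> n - l \<and> j \<le> n - l \<and>
                 (\<forall>k<l. rplot f x n eps (i + k) (j + k))}"
  define Q where "Q = {(i, j). i < n \<and> j < n \<and> i \<noteq> j \<and> \<not> (l \<le> n \<and> i \<le> n - l \<and> j \<le> n - l)}"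
  define Dg where "Dg = (\<lambda>i. (i, i)) ` {..<n}"
  define R where "R = P \<inter> Q"
  have box: "{..<n} \<times> {..<n} \<supseteq> P" "{..<n} \<times> {..<n} \<supseteq> Q"
    unfolding P_def Q_def by auto
  have finP: "finite P" and finQ: "finite Q" using box by (auto intro: finite_subset)
  have finR: "finite R" using finQ R_def by auto
  have Sfin: "S \<subseteq> {..n} \<times> {..n}" unfolding S_def by auto
  hence finS: "finite S" by (rule finite_subset) auto
  have finD: "finite Dg" unfolding Dg_def by auto
  have cardD: "card Dg = n" unfolding Dg_def by (simp add: card_image inj_on_def)
  have Pdecomp: "P = Dg \<union> S \<union> R"
  proof (intro equalityI subsetI)
    fix p assume pP: "p \<in> P"
    obtain i j where p: "p = (i, j)" by force
    have ij: "i < n" "j < n" and bw: "bowen_dist f l ((f ^^ i) x) ((f ^^ j) x) \<le> eps"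
      using pP p unfolding P_def by auto
    show "p \<in> Dg \<union> S \<union> R"
    proof (cases "i = j")
      case True thus ?thesis using p ij unfolding Dg_def by auto
    next
      case False
      show ?thesis
      proof (cases "l \<le> n \<and> i \<le> n - l \<and> j \<le> n - l")
        case True
        have "\<forall>k<l. rplot f x n eps (i + k) (j + k)"
        proof (intro allI impI)
          fix k assume k: "k < l"
          hence "dist ((f ^^ (i + k)) x) ((f ^^ (j + k)) x) \<le> eps"
            using bw bowen_le_iff[OF l1] by blast
          moreover have "i + k < n" "j + k < n" using True k by linarith+
          ultimately show "rplot f x n eps (i + k) (j + k)" unfolding rplot_def by simp
        qed
        thus ?thesis using True False p unfolding S_def by auto
      next
        case c2: False
        have "p \<in> Q" using c2 False ij p unfolding Q_def by auto
        thus ?thesis using pP R_def by auto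
      qed
    qed
  next
    fix p assume pp: "p \<in> Dg \<union> S \<union> R"
    obtain i j where p: "p = (i, j)" by force
    show "p \<in> P"
    proof -
      consider "p \<in> Dg" | "p \<in> S" | "p \<in> R" using pp by blast
      thus ?thesis
      proof cases
        case 1
        then obtain m where m: "m < n" "p = (m, m)" unfolding Dg_def by auto
        have "bowen_dist f l ((f ^^ m) x) ((f ^^ m) x) \<le> eps"
          using bowen_le_iff[OF l1, of f m x m eps] assms(4) by simp
        thus ?thesis using m unfolding P_def by simp
      next
        case 2
        hence S2: "l \<le> n" "i \<le> n - l" "j \<le> n - l" "\<forall>k<l. rplot f x n eps (i + k) (j + k)"
          using p unfolding S_def by auto
        have "\<forall>k<l. dist ((f ^^ (i + k)) x) ((f ^^ (j + k)) x) \<le> eps"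
          using S2(4) unfolding rplot_def by blast
        hence "bowen_dist f l ((f ^^ i) x) ((f ^^ j) x) \<le> eps" using bowen_le_iff[OF l1] by blast
        moreover have "i < n" "j < n" using S2 l1 by linarith+
        ultimately show ?thesis using p unfolding P_def by simp
      next
        case 3 thus ?thesis unfolding R_def by blast
      qed
    qed
  qed
  have dis1: "Dg \<inter> S = {}" unfolding Dg_def S_def by auto
  have dis2: "(Dg \<union> S) \<inter> R = {}" unfolding Dg_def S_def R_def Q_def by auto
  have cardP: "card P = n + card S + card R"
    unfolding Pdecomp
    by (subst card_Un_disjoint[OF _ finR dis2]) (auto simp: finD finS card_Un_disjoint[OF finD finS dis1] cardD)
  have cS: "card S = (\<Sum>L\<in>{l..n}. (L + 1 - l) * num_lines f x n eps L)"
    unfolding S_def by (rule card_segments[OF l1])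
  have QA: "Q \<subseteq> {n - l<..<n} \<times> {..<n} \<union> {..<n} \<times> {n - l<..<n}"
    unfolding Q_def by auto
  have cA: "card {n - l<..<n} \<le> l - 1" by simp
  have "card Q \<le> card ({n - l<..<n} \<times> {..<n}) + card ({..<n} \<times> {n - l<..<n})"
    by (rule order_trans[OF card_mono[OF _ QA] card_Un_le]) auto
  also have "\<dots> \<le> (l - 1) * n + n * (l - 1)"
    using add_mono[OF mult_right_mono[OF cA, of n] mult_left_mono[OF cA, of n]] by (simp add: card_cartesian_product)
  finally have cQ: "card Q \<le> 2 * (l - 1) * n" by (simp add: algebra_simps)
  have cR: "card R \<le> 2 * (l - 1) * n"
    using card_mono[OF finQ, of R] cQ unfolding R_def by auto
  have nlt: "n + card R < 2 * l * n"
  proof -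
    have "n + card R \<le> n + 2 * (l - 1) * n" using cR by simp
    also have "\<dots> < 2 * l * n" using l1 assms(3)
      by (cases l) (auto simp: algebra_simps)
    finally show ?thesis .
  qed
  define \<delta> where "\<delta> = (real n + real (card R)) / (real n)^2"
  have n0: "real n > 0" "real n - 1 > 0" using assms(3) by auto
  have nn: "(real n)^2 - real n = real n * (real n - 1)" by (simp add: power2_eq_square algebra_simps)
  have "corr_sum f l x n eps = (real n + real (card S) + real (card R)) / (real n)^2"
    unfolding corr_sum_def using cardP P_def by simp
  also have "\<dots> = (real n - 1) / real n * (real (card S) / ((real n)^2 - real n)) + \<delta>"
    unfolding \<delta>_def nn using n0 by (simp add: field_simps power2_eq_square)
  also have "\<dots> = (real n - 1) / real n * (RR_sum f x n eps l - (real l - 1) * Lambda_sum f x n eps l) + \<delta>"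
    using RR_Lambda[OF l1, of f x n eps] cS by simp
  finally have eq: "corr_sum f l x n eps
     = (real n - 1) / real n * (RR_sum f x n eps l - (real l - 1) * Lambda_sum f x n eps l) + \<delta>" .
  have lo: "1 / real n \<le> \<delta>"
    unfolding \<delta>_def using n0 by (simp add: field_simps power2_eq_square)
  have "real n + real (card R) < 2 * real l * real n" using nlt by (metis of_nat_add of_nat_less_iff of_nat_mult of_nat_numeral)
  hence "(real n + real (card R)) / (real n)^2 < (2 * real l * real n) / (real n)^2"
    using n0 by (intro divide_strict_right_mono) simp_all
  also have "(2 * real l * real n) / (real n)^2 = 2 * real l / real n"
    using n0 by (simp add: power2_eq_square)
  finally have hi: "\<delta> < 2 * real l / real n" unfolding \<delta>_def .
  show ?thesis using eq lo hi by blast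
qed

end
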